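(* Let $G=(V,E)$ be a graph with a partition $(V_1,V_2)$ of $V$ such that $G[V_1]$ and $G[V_2]$ are $P_5$-free, and let $k$ be an integer. Suppose that $k\ge 1$, that $G$ contains a $P_5$, that every vertex of $G$ lies on some $P_5$ in $G$, and that every $P_5$ in $G$ contains at least $4$ vertices of $V_2$. Let $v\in V_2$ be an isolated vertex of $G[V_2]$, and let $F\subseteq V_2$ be a set such that $G\setminus F$ is $P_5$-free and $v\in F$. Then there exists a set $F'\subseteq V_2$ such that $G\setminus F'$ is $P_5$-free, $v\notin F'$, and $|F'|\le |F|$.
   Context: Graphs are finite, simple and undirected. A $P_5$ is a path on $5$ vertices (as a not necessarily induced subgraph); a graph is $P_5$-free if it contains no $P_5$. $G[X]$ denotes the subgraph induced by $X$, and $G\setminus F=G[V\setminus F]$. *)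

theory Defs
  imports Main
begin

definition simple_graph :: "'a set \<Rightarrow> ('a \<Rightarrow> 'a \<Rightarrow> bool) \<Rightarrow> bool" where
  "simple_graph V E \<longleftrightarrow> finite V \<and> (\<forall>x y. E x y \<longrightarrow> E y x) \<and> (\<forall>x. \<not> E x x)
     \<and> (\<forall>x y. E x y \<longrightarrow> x \<in> V \<and> y \<in> V)"

text \<open>A (not necessarily induced) path on 5 vertices in the induced subgraph G[X],
given as a list of its vertices in order.\<close>
definition is_P5 :: "('a \<Rightarrow> 'a \<Rightarrow> bool) \<Rightarrow> 'a set \<Rightarrow> 'a list \<Rightarrow> bool" where
  "is_P5 E X p \<longleftrightarrow> length p = 5 \<and> distinct p \<and> set p \<subseteq> X
     \<and> (\<forall>i < 4. E (p ! i) (p ! Suc i))"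

definition P5_free :: "('a \<Rightarrow> 'a \<Rightarrow> bool) \<Rightarrow> 'a set \<Rightarrow> bool" where
  "P5_free E X \<longleftrightarrow> \<not> (\<exists>p. is_P5 E X p)"

end

theory Submission
  imports Defs
begin

lemma P5_list: "is_P5 E X [a,b,c,d,e] \<longleftrightarrow> distinct [a,b,c,d,e] \<and> {a,b,c,d,e} \<subseteq> X \<and> E a b \<and> E b c \<and> E c d \<and> E d e"
  unfolding is_P5_def by (auto simp: less_Suc_eq numeral_eq_Suc)

lemma P5_ex: "is_P5 E X p \<Longrightarrow> \<exists>a b c d e. p = [a,b,c,d,e]"
  unfolding is_P5_def
  by (cases p; auto; rename_tac l; case_tac l; auto; rename_tac l; case_tac l; auto;
      rename_tac l; case_tac l; auto; rename_tac l; case_tac l; auto)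

lemma P5_mono: "is_P5 E X p \<Longrightarrow> set p \<subseteq> Y \<Longrightarrow> is_P5 E Y p"
  unfolding is_P5_def by auto

lemma two_out:
  assumes "is_P5 E X p" "x \<in> set p" "y \<in> set p" "x \<noteq> y" "x \<notin> V2" "y \<notin> V2"
  shows "card (set p \<inter> V2) \<le> 3"
proof -
  have c5: "card (set p) = 5" using assms(1) distinct_card unfolding is_P5_def by fastforce
  have "set p \<inter> V2 \<subseteq> set p - {x,y}" using assms by auto
  hence "card (set p \<inter> V2) \<le> card (set p - {x,y})" by (intro card_mono) auto
  also have "\<dots> = 3" using c5 assms(2-4) by (simp add: card_Diff_subset)
  finally show ?thesis .
qed

lemma endA:
  assumes G: "simple_graph V E"
    and part: "V1 \<union> V2 = V"
    and many: "\<forall>p. is_P5 E V p \<longrightarrow> card (set p \<inter> V2) \<ge> 4"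
    and v: "\<forall>u \<in> V2. \<not> E v u"
    and p: "is_P5 E V p" "v \<in> set p"
  shows "\<exists>a x y z. set [v,a,x,y,z] = set p \<and> is_P5 E (set p) [v,a,x,y,z]
           \<and> a \<in> V1 \<and> x \<in> V2 \<and> y \<in> V2 \<and> z \<in> V2"
proof -
  obtain p0 p1 p2 p3 p4 where pe: "p = [p0,p1,p2,p3,p4]" using P5_ex[OF p(1)] by blast
  have m: "card (set p \<inter> V2) \<ge> 4" using many p by blast
  have nb: "\<And>u. E v u \<Longrightarrow> u \<notin> V2" using v by auto
  have two: "\<And>x y. x \<in> set p \<Longrightarrow> y \<in> set p \<Longrightarrow> x \<noteq> y \<Longrightarrow> x \<notin> V2 \<Longrightarrow> y \<notin> V2 \<Longrightarrow> False"
    using two_out[OF p(1)] m by fastforce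
  have sym: "\<And>x y. E x y \<Longrightarrow> E y x" using G unfolding simple_graph_def by blast
  have inV: "set p \<subseteq> V" using p unfolding is_P5_def by auto
  have P: "distinct [p0,p1,p2,p3,p4]" "E p0 p1" "E p1 p2" "E p2 p3" "E p3 p4"
    using p(1) unfolding pe P5_list by auto
  have V1: "\<And>u. u \<in> set p \<Longrightarrow> u \<notin> V2 \<Longrightarrow> u \<in> V1" using inV part by auto
  show ?thesis
  proof -
    have "v = p0 \<or> v = p1 \<or> v = p2 \<or> v = p3 \<or> v = p4" using p(2) pe by auto
    moreover
    { assume "v = p1 \<or> v = p2 \<or> v = p3"
      hence False using P nb sym two[of p0 p2] two[of p1 p3] two[of p2 p4] unfolding pe by auto }
    moreover
    { assume vv: "v = p0"
      have n1: "p1 \<notin> V2" using nb P vv by auto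
      have "p2 \<in> V2" "p3 \<in> V2" "p4 \<in> V2"
        using two[of p1 p2] two[of p1 p3] two[of p1 p4] n1 P unfolding pe by auto
      hence ?thesis using vv n1 V1[of p1] P pe
        by (intro exI[of _ p1] exI[of _ p2] exI[of _ p3] exI[of _ p4]) (auto simp: P5_list) }
    moreover
    { assume vv: "v = p4"
      have n1: "p3 \<notin> V2" using nb P vv sym by auto
      have "p2 \<in> V2" "p1 \<in> V2" "p0 \<in> V2"
        using two[of p3 p2] two[of p3 p1] two[of p3 p0] n1 P unfolding pe by auto
      hence ?thesis using vv n1 V1[of p3] P pe sym
        by (intro exI[of _ p3] exI[of _ p2] exI[of _ p1] exI[of _ p0]) (auto simp: P5_list) }
    ultimately show ?thesis by blast
  qed
qed


theorem lemma3:
  fixes V V1 V2 :: "'a set" and E :: "'a \<Rightarrow> 'a \<Rightarrow> bool" and k :: int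
    and v :: 'a and F :: "'a set"
  assumes G: "simple_graph V E"
    and part: "V1 \<union> V2 = V" "V1 \<inter> V2 = {}"
    and free1: "P5_free E V1" and free2: "P5_free E V2"
    and k: "k \<ge> 1"
    and hasP5: "\<exists>p. is_P5 E V p"
    and cover: "\<forall>x \<in> V. \<exists>p. is_P5 E V p \<and> x \<in> set p"
    and many: "\<forall>p. is_P5 E V p \<longrightarrow> card (set p \<inter> V2) \<ge> 4"
    and v: "v \<in> V2" "\<forall>u \<in> V2. \<not> E v u"
    and F: "F \<subseteq> V2" "P5_free E (V - F)" "v \<in> F"
  shows "\<exists>F'. F' \<subseteq> V2 \<and> P5_free E (V - F') \<and> v \<notin> F' \<and> card F' \<le> card F"
proof (cases "P5_free E (V - (F - {v}))")
  case True
  then show ?thesis using F(1) card_Diff1_le[of F v] by (intro exI[of _ "F - {v}"]) auto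
next
  case False
  have finF: "finite F" 
  proof -
    have "finite V" using G unfolding simple_graph_def by blast
    moreover have "F \<subseteq> V" using F(1) part(1) by blast
    ultimately show ?thesis by (rule finite_subset[rotated])
  qed
  have sym: "\<And>x y. E x y \<Longrightarrow> E y x" using G unfolding simple_graph_def by blast
  obtain p0 where p0: "is_P5 E (V - (F - {v})) p0" using False unfolding P5_free_def by blast
  have vp0: "v \<in> set p0"
  proof (rule ccontr)
    assume "v \<notin> set p0"
    hence "is_P5 E (V - F) p0" using p0 P5_mono[OF p0] unfolding is_P5_def by auto
    thus False using F(2) unfolding P5_free_def by blast
  qed
  have p0V: "is_P5 E V p0" using P5_mono[OF p0] p0 unfolding is_P5_def by auto
  obtain a x y z where A: "set [v,a,x,y,z] = set p0" "is_P5 E (set p0) [v,a,x,y,z]"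
      "a \<in> V1" "x \<in> V2" "y \<in> V2" "z \<in> V2"
    using endA[OF G part(1) many v(2) p0V vp0] by blast
  have p0s: "set p0 \<subseteq> V - (F - {v})" using p0 unfolding is_P5_def by auto
  have xF: "x \<notin> F" "x \<noteq> v" "x \<in> V"
    using A(1,2) p0s unfolding P5_list by auto
  define F' where "F' = insert x (F - {v})"
  have "card F' = card F"
  proof -
    have "card F' = Suc (card (F - {v}))" unfolding F'_def using finF xF by simp
    also have "\<dots> = card F" using card_Suc_Diff1[OF finF F(3)] .
    finally show ?thesis .
  qed
  moreover have "F' \<subseteq> V2" "v \<notin> F'" using F'_def F(1) A xF by auto
  moreover have "P5_free E (V - F')"
    unfolding P5_free_def
  proof
    assume "\<exists>q. is_P5 E (V - F') q"
    then obtain q where q: "is_P5 E (V - F') q" by blast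
    have qs: "set q \<subseteq> V - F'" using q unfolding is_P5_def by auto
    have vq: "v \<in> set q"
    proof (rule ccontr)
      assume "v \<notin> set q"
      hence "set q \<subseteq> V - F" using qs F'_def by auto
      hence "is_P5 E (V - F) q" using P5_mono[OF q] by blast
      thus False using F(2) unfolding P5_free_def by blast
    qed
    have qV: "is_P5 E V q" using P5_mono[OF q] qs by auto
    obtain a' x' y' z' where B: "set [v,a',x',y',z'] = set q" "is_P5 E (set q) [v,a',x',y',z']"
      "a' \<in> V1" "x' \<in> V2" "y' \<in> V2" "z' \<in> V2"
      using endA[OF G part(1) many v(2) qV vq] by blast
    show False
    proof (cases "a' = a")
      case False
      have A2: "distinct [v,a,x,y,z]" "E v a" "E a x" "E x y" using A(2) unfolding P5_list by auto
      have B2: "E v a'" using B(2) unfolding P5_list by auto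
      have sub: "{a',v,a,x,y} \<subseteq> V" using A(3-5) B(3) part(1) v(1) by auto
      have d: "a' \<noteq> v" "a' \<noteq> x" "a' \<noteq> y" using B(3) A(4,5) v(1) part(2) by auto
      have "is_P5 E V [a',v,a,x,y]"
        unfolding P5_list using A2 B2 sub d False sym by auto
      hence "card (set [a',v,a,x,y] \<inter> V2) \<le> 3"
        by (rule two_out[of _ _ _ a' a]) (use False A B part in auto)
      thus False using many \<open>is_P5 E V [a',v,a,x,y]\<close> by fastforce
    next
      case True
      have "x \<notin> set q" using qs F'_def by auto
      hence d: "x \<noteq> x'" "x \<noteq> y'" "x \<noteq> z'" using B(1) by auto
      have A2: "distinct [v,a,x,y,z]" "E a x" using A(2) unfolding P5_list by auto
      have B2: "distinct [v,a',x',y',z']" "E a' x'" "E x' y'" "E y' z'" using B(2) unfolding P5_list by auto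
      have sq: "{a',x',y',z'} \<subseteq> V - F" using qs B(1) B2(1) F'_def by auto
      have "x \<in> V - F" using xF by auto
      hence "is_P5 E (V - F) [x,a,x',y',z']"
        unfolding P5_list using A2 B2 sq d True sym by auto
      thus False using F(2) unfolding P5_free_def by blast
    qed
  qed
  ultimately show ?thesis by (intro exI[of _ F']) auto
qed

end
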